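(* Let $(S,\circ)$ be a right loop and let $L$ be the congruence on $S$ generated by $\{(x,\,x\theta^S f^S(y,z)) : x,y,z\in S\}\cup\{(x\circ y,\,y\circ x): x,y\in S\}$. Then $L$ is the smallest congruence on $S$ such that the quotient right loop $S/L$ is an abelian group.
   Context: A right loop is a set $S$ with a binary operation $\circ$ and an element $1$ such that $1\circ x=x\circ 1=x$ for all $x$, and for all $a,b\in S$ the equation $X\circ a=b$ has a unique solution in $S$. A congruence on $S$ is an equivalence relation on $S$ which is a right subloop of $S\times S$ (componentwise operation); for a congruence $R$ with class $T=R_1$ of $1$, the classes are $T\circ x$ and $S/R=\{T\circ x\}$ is a right loop with $(T\circ x)\circ(T\circ y)=T\circ(x\circ y)$. For $y,z\in S$, $f^S(y,z):S\to S$ sends $x$ to the unique $X\in S$ with $X\circ(y\circ z)=(x\circ y)\circ z$. $G_S$ is the subgroup of $\mathrm{Sym}(S)$ generated by all $f^S(y,z)$, and $x\theta^S h:=h(x)$ for $h\in G_S$. *)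

theory Defs
  imports "HOL-Algebra.Group"
begin

definition right_loop :: "'a set \<Rightarrow> ('a \<Rightarrow> 'a \<Rightarrow> 'a) \<Rightarrow> 'a \<Rightarrow> bool" where
  "right_loop S op e \<longleftrightarrow>
     e \<in> S \<and> (\<forall>x\<in>S. \<forall>y\<in>S. op x y \<in> S) \<and>
     (\<forall>x\<in>S. op e x = x \<and> op x e = x) \<and>
     (\<forall>a\<in>S. \<forall>b\<in>S. \<exists>!X. X \<in> S \<and> op X a = b)"

definition rdiv :: "'a set \<Rightarrow> ('a \<Rightarrow> 'a \<Rightarrow> 'a) \<Rightarrow> 'a \<Rightarrow> 'a \<Rightarrow> 'a" where
  "rdiv S op b a = (THE X. X \<in> S \<and> op X a = b)"

definition right_subloop :: "'a set \<Rightarrow> ('a \<Rightarrow> 'a \<Rightarrow> 'a) \<Rightarrow> 'a \<Rightarrow> 'a set \<Rightarrow> bool" where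
  "right_subloop S op e H \<longleftrightarrow>
     H \<subseteq> S \<and> e \<in> H \<and> (\<forall>x\<in>H. \<forall>y\<in>H. op x y \<in> H) \<and>
     (\<forall>a\<in>H. \<forall>b\<in>H. rdiv S op b a \<in> H)"

definition prod_op :: "('a \<Rightarrow> 'a \<Rightarrow> 'a) \<Rightarrow> 'a \<times> 'a \<Rightarrow> 'a \<times> 'a \<Rightarrow> 'a \<times> 'a" where
  "prod_op op p q = (op (fst p) (fst q), op (snd p) (snd q))"

definition congruence_rl :: "'a set \<Rightarrow> ('a \<Rightarrow> 'a \<Rightarrow> 'a) \<Rightarrow> 'a \<Rightarrow> ('a \<times> 'a) set \<Rightarrow> bool" where
  "congruence_rl S op e R \<longleftrightarrow> equiv S R \<and> right_subloop (S \<times> S) (prod_op op) (e, e) R"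

definition cong_gen :: "'a set \<Rightarrow> ('a \<Rightarrow> 'a \<Rightarrow> 'a) \<Rightarrow> 'a \<Rightarrow> ('a \<times> 'a) set \<Rightarrow> ('a \<times> 'a) set" where
  "cong_gen S op e G = \<Inter>{R. congruence_rl S op e R \<and> G \<subseteq> R}"

definition fS :: "'a set \<Rightarrow> ('a \<Rightarrow> 'a \<Rightarrow> 'a) \<Rightarrow> 'a \<Rightarrow> 'a \<Rightarrow> 'a \<Rightarrow> 'a" where
  "fS S op y z x = rdiv S op (op (op x y) z) (op y z)"

definition thetaS :: "'a \<Rightarrow> ('a \<Rightarrow> 'a) \<Rightarrow> 'a" where
  "thetaS x h = h x"

text \<open>Quotient right loop S/R: classes T o x with T the class of e,
  operation (T o x)(T o y) = T o (x o y).\<close>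
definition rcoset_rl :: "('a \<Rightarrow> 'a \<Rightarrow> 'a) \<Rightarrow> 'a set \<Rightarrow> 'a \<Rightarrow> 'a set" where
  "rcoset_rl op T x = (\<lambda>t. op t x) ` T"

definition quot_rl :: "'a set \<Rightarrow> ('a \<Rightarrow> 'a \<Rightarrow> 'a) \<Rightarrow> 'a \<Rightarrow> ('a \<times> 'a) set \<Rightarrow> 'a set monoid" where
  "quot_rl S op e R =
    (let T = R `` {e} in
     \<lparr> carrier = {rcoset_rl op T x | x. x \<in> S},
       mult = (\<lambda>A B. rcoset_rl op T
                 (op (SOME x. x \<in> S \<and> A = rcoset_rl op T x)
                     (SOME y. y \<in> S \<and> B = rcoset_rl op T y))),
       one = rcoset_rl op T e \<rparr>)"

end

theory Submission
  imports Defs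
begin

locale rloop =
  fixes S :: "'a set" and op :: "'a \<Rightarrow> 'a \<Rightarrow> 'a" and e :: 'a
  assumes rl: "right_loop S op e"
begin

lemma e_in: "e \<in> S" using rl by (simp add: right_loop_def)
lemma op_in: "x \<in> S \<Longrightarrow> y \<in> S \<Longrightarrow> op x y \<in> S" using rl by (simp add: right_loop_def)
lemma lid: "x \<in> S \<Longrightarrow> op e x = x" using rl by (simp add: right_loop_def)
lemma rid: "x \<in> S \<Longrightarrow> op x e = x" using rl by (simp add: right_loop_def)
lemma ex1: "a \<in> S \<Longrightarrow> b \<in> S \<Longrightarrow> \<exists>!X. X \<in> S \<and> op X a = b"
  using rl by (simp add: right_loop_def)

lemma rdiv_prop: assumes "a \<in> S" "b \<in> S"
  shows "rdiv S op b a \<in> S \<and> op (rdiv S op b a) a = b"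
  unfolding rdiv_def by (rule theI') (rule ex1[OF assms])

lemma rdiv_in: "a \<in> S \<Longrightarrow> b \<in> S \<Longrightarrow> rdiv S op b a \<in> S" using rdiv_prop by blast
lemma rdiv_eq: "a \<in> S \<Longrightarrow> b \<in> S \<Longrightarrow> op (rdiv S op b a) a = b" using rdiv_prop by blast

lemma rdiv_uniq: assumes "a \<in> S" "b \<in> S" "X \<in> S" "op X a = b"
  shows "rdiv S op b a = X"
  using ex1[OF assms(1,2)] rdiv_prop[OF assms(1,2)] assms(3,4) by blast

lemma rdiv_prod: assumes "a \<in> S \<times> S" "b \<in> S \<times> S"
  shows "rdiv (S \<times> S) (prod_op op) b a = (rdiv S op (fst b) (fst a), rdiv S op (snd b) (snd a))"
  unfolding rdiv_def[of "S \<times> S"]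
proof (rule the_equality)
  show "(rdiv S op (fst b) (fst a), rdiv S op (snd b) (snd a)) \<in> S \<times> S \<and>
    prod_op op (rdiv S op (fst b) (fst a), rdiv S op (snd b) (snd a)) a = b"
    using assms by (auto simp: prod_op_def rdiv_in rdiv_eq)
next
  fix X assume "X \<in> S \<times> S \<and> prod_op op X a = b"
  then show "X = (rdiv S op (fst b) (fst a), rdiv S op (snd b) (snd a))"
    using assms by (cases X) (auto simp: prod_op_def rdiv_uniq)
qed

lemma fS_in: "x \<in> S \<Longrightarrow> y \<in> S \<Longrightarrow> z \<in> S \<Longrightarrow> fS S op y z x \<in> S"
  unfolding fS_def by (simp add: rdiv_in op_in)

lemma fS_eq: "x \<in> S \<Longrightarrow> y \<in> S \<Longrightarrow> z \<in> S \<Longrightarrow> op (fS S op y z x) (op y z) = op (op x y) z"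
  unfolding fS_def by (simp add: rdiv_eq op_in)

lemma congI:
  assumes "R \<subseteq> S \<times> S" "\<And>x. x \<in> S \<Longrightarrow> (x,x) \<in> R" "\<And>x y. (x,y) \<in> R \<Longrightarrow> (y,x) \<in> R"
    "\<And>x y z. (x,y) \<in> R \<Longrightarrow> (y,z) \<in> R \<Longrightarrow> (x,z) \<in> R"
    "\<And>a b c d. (a,b) \<in> R \<Longrightarrow> (c,d) \<in> R \<Longrightarrow> (op a c, op b d) \<in> R"
    "\<And>a b c d. (a,b) \<in> R \<Longrightarrow> (c,d) \<in> R \<Longrightarrow> (rdiv S op c a, rdiv S op d b) \<in> R"
  shows "congruence_rl S op e R"
  unfolding congruence_rl_def right_subloop_def
proof (intro conjI ballI)
  show "equiv S R"
  proof (rule equivI)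
    show "R \<subseteq> S \<times> S" by fact
    show "refl_on S R" unfolding refl_on_def using assms(2) by blast
    show "sym R" unfolding sym_def using assms(3) by blast
    show "trans R" unfolding trans_def using assms(4) by blast
  qed
  show "R \<subseteq> S \<times> S" by fact
  show "(e, e) \<in> R" using assms(2) e_in by blast
  fix x y assume xR: "x \<in> R" and yR: "y \<in> R"
  obtain a b where x: "x = (a,b)" by (cases x)
  obtain c d where y: "y = (c,d)" by (cases y)
  show "prod_op op x y \<in> R" using assms(5)[of a b c d] xR yR x y by (simp add: prod_op_def)
  have "x \<in> S \<times> S" "y \<in> S \<times> S" using xR yR assms(1) by auto
  then have "rdiv (S \<times> S) (prod_op op) y x = (rdiv S op c a, rdiv S op d b)"
    using x y by (simp add: rdiv_prod)
  then show "rdiv (S \<times> S) (prod_op op) y x \<in> R"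
    using assms(6)[of a b c d] xR yR x y by simp
qed

context
  fixes R assumes cR: "congruence_rl S op e R"
begin

lemma eqR: "equiv S R" using cR by (simp add: congruence_rl_def)
lemma R_sub: "R \<subseteq> S \<times> S" using eqR by (simp add: equiv_def)
lemma R_in: "(x,y) \<in> R \<Longrightarrow> x \<in> S \<and> y \<in> S" using R_sub by blast
lemma R_refl: "x \<in> S \<Longrightarrow> (x,x) \<in> R" using eqR by (simp add: equiv_def refl_on_def)
lemma R_sym: "(x,y) \<in> R \<Longrightarrow> (y,x) \<in> R" using eqR by (auto simp: equiv_def sym_def)
lemma R_trans: "(x,y) \<in> R \<Longrightarrow> (y,z) \<in> R \<Longrightarrow> (x,z) \<in> R" using eqR by (auto simp: equiv_def trans_def)
lemma R_op: assumes "(a,b) \<in> R" "(c,d) \<in> R" shows "(op a c, op b d) \<in> R"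
proof -
  have "prod_op op (a,b) (c,d) \<in> R"
    using cR assms unfolding congruence_rl_def right_subloop_def by blast
  then show ?thesis by (simp add: prod_op_def)
qed
lemma R_div: assumes "(a,b) \<in> R" "(c,d) \<in> R" shows "(rdiv S op c a, rdiv S op d b) \<in> R"
proof -
  have "rdiv (S \<times> S) (prod_op op) (c,d) (a,b) \<in> R"
    using cR assms unfolding congruence_rl_def right_subloop_def by blast
  moreover have "rdiv (S \<times> S) (prod_op op) (c,d) (a,b) = (rdiv S op c a, rdiv S op d b)"
    using assms R_in by (subst rdiv_prod) auto
  ultimately show ?thesis by simp
qed

lemma class_eq: assumes "x \<in> S" shows "rcoset_rl op (R``{e}) x = R``{x}"
proof
  show "rcoset_rl op (R``{e}) x \<subseteq> R``{x}"
  proof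
    fix u assume "u \<in> rcoset_rl op (R``{e}) x"
    then obtain t where t: "(e,t) \<in> R" "u = op t x" by (auto simp: rcoset_rl_def)
    have "(op e x, op t x) \<in> R" using R_op[OF t(1) R_refl[OF assms]] .
    then show "u \<in> R``{x}" using t assms lid by simp
  qed
  show "R``{x} \<subseteq> rcoset_rl op (R``{e}) x"
  proof
    fix y assume "y \<in> R``{x}"
    then have xy: "(x,y) \<in> R" by simp
    then have yS: "y \<in> S" using R_in by blast
    have "(rdiv S op x x, rdiv S op y x) \<in> R" using R_div[OF R_refl[OF assms] xy] .
    moreover have "rdiv S op x x = e" using rdiv_uniq[OF assms assms e_in lid[OF assms]] .
    ultimately have "(e, rdiv S op y x) \<in> R" by simp
    moreover have "y = op (rdiv S op y x) x" using rdiv_eq[OF assms yS] by simp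
    ultimately show "y \<in> rcoset_rl op (R``{e}) x" unfolding rcoset_rl_def by blast
  qed
qed

lemma cls_eq_iff: "x \<in> S \<Longrightarrow> y \<in> S \<Longrightarrow> R``{x} = R``{y} \<longleftrightarrow> (x,y) \<in> R"
  using eq_equiv_class_iff[OF eqR] .

lemma quot_carrier: "carrier (quot_rl S op e R) = (\<lambda>x. R``{x}) ` S"
  by (auto simp: quot_rl_def Let_def class_eq) (metis class_eq)

lemma quot_one: "one (quot_rl S op e R) = R``{e}"
  by (simp add: quot_rl_def Let_def class_eq e_in)

lemma quot_mult: assumes "x \<in> S" "y \<in> S"
  shows "mult (quot_rl S op e R) (R``{x}) (R``{y}) = R``{op x y}"
proof -
  let ?T = "R``{e}"
  define x' where "x' = (SOME x'. x' \<in> S \<and> R``{x} = rcoset_rl op ?T x')"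
  define y' where "y' = (SOME y'. y' \<in> S \<and> R``{y} = rcoset_rl op ?T y')"
  have "x' \<in> S \<and> R``{x} = rcoset_rl op ?T x'" unfolding x'_def
    by (rule someI[of _ x]) (simp add: assms class_eq)
  then have x': "x' \<in> S" "(x,x') \<in> R" using class_eq cls_eq_iff assms by auto
  have "y' \<in> S \<and> R``{y} = rcoset_rl op ?T y'" unfolding y'_def
    by (rule someI[of _ y]) (simp add: assms class_eq)
  then have y': "y' \<in> S" "(y,y') \<in> R" using class_eq cls_eq_iff assms by auto
  have "mult (quot_rl S op e R) (R``{x}) (R``{y}) = rcoset_rl op ?T (op x' y')"
    by (simp add: quot_rl_def Let_def x'_def y'_def)
  also have "\<dots> = R``{op x' y'}" using class_eq op_in x' y' by simp
  also have "\<dots> = R``{op x y}" using R_op[OF x'(2) y'(2)] cls_eq_iff op_in assms x' y'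
    by (metis R_sym)
  finally show ?thesis .
qed

lemma quot_cg:
  assumes A: "\<And>x y z. x \<in> S \<Longrightarrow> y \<in> S \<Longrightarrow> z \<in> S \<Longrightarrow> (op (op x y) z, op x (op y z)) \<in> R"
    and C: "\<And>x y. x \<in> S \<Longrightarrow> y \<in> S \<Longrightarrow> (op x y, op y x) \<in> R"
  shows "comm_group (quot_rl S op e R)"
proof (rule comm_groupI)
  fix a b assume "a \<in> carrier (quot_rl S op e R)" "b \<in> carrier (quot_rl S op e R)"
  then obtain x y where "x \<in> S" "y \<in> S" "a = R``{x}" "b = R``{y}" by (auto simp: quot_carrier)
  then show "mult (quot_rl S op e R) a b \<in> carrier (quot_rl S op e R)"
    and "mult (quot_rl S op e R) a b = mult (quot_rl S op e R) b a"
    by (auto simp: quot_mult quot_carrier op_in cls_eq_iff C)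
next
  show "one (quot_rl S op e R) \<in> carrier (quot_rl S op e R)"
    by (simp add: quot_one quot_carrier e_in)
next
  fix a b c assume "a \<in> carrier (quot_rl S op e R)" "b \<in> carrier (quot_rl S op e R)"
     "c \<in> carrier (quot_rl S op e R)"
  then obtain x y z where "x \<in> S" "y \<in> S" "z \<in> S" "a = R``{x}" "b = R``{y}" "c = R``{z}"
    by (auto simp: quot_carrier)
  then show "mult (quot_rl S op e R) (mult (quot_rl S op e R) a b) c =
    mult (quot_rl S op e R) a (mult (quot_rl S op e R) b c)"
    by (auto simp: quot_mult op_in cls_eq_iff A)
next
  fix a assume "a \<in> carrier (quot_rl S op e R)"
  then obtain x where x: "x \<in> S" "a = R``{x}" by (auto simp: quot_carrier)
  then show "mult (quot_rl S op e R) (one (quot_rl S op e R)) a = a"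
    by (simp add: quot_one quot_mult e_in lid)
  show "\<exists>b \<in> carrier (quot_rl S op e R). mult (quot_rl S op e R) b a = one (quot_rl S op e R)"
  proof (rule bexI)
    show "R``{rdiv S op e x} \<in> carrier (quot_rl S op e R)"
      using x e_in rdiv_in by (simp add: quot_carrier)
    show "mult (quot_rl S op e R) (R``{rdiv S op e x}) a = one (quot_rl S op e R)"
      using x e_in rdiv_in rdiv_eq by (simp add: quot_mult quot_one)
  qed
qed

lemma quot_cg_D:
  assumes G: "comm_group (quot_rl S op e R)" and xyz: "x \<in> S" "y \<in> S" "z \<in> S"
  shows "(op (op x y) z, op x (op y z)) \<in> R" "(op x y, op y x) \<in> R"
proof -
  interpret comm_group "quot_rl S op e R" by (rule G)
  have c: "R``{u} \<in> carrier (quot_rl S op e R)" if "u \<in> S" for u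
    using that by (simp add: quot_carrier)
  have "mult (quot_rl S op e R) (mult (quot_rl S op e R) (R``{x}) (R``{y})) (R``{z}) =
    mult (quot_rl S op e R) (R``{x}) (mult (quot_rl S op e R) (R``{y}) (R``{z}))"
    by (rule m_assoc) (auto intro: c xyz)
  then show "(op (op x y) z, op x (op y z)) \<in> R"
    using xyz by (simp add: quot_mult op_in cls_eq_iff)
  have "mult (quot_rl S op e R) (R``{x}) (R``{y}) = mult (quot_rl S op e R) (R``{y}) (R``{x})"
    by (rule m_comm) (auto intro: c xyz)
  then show "(op x y, op y x) \<in> R"
    using xyz by (simp add: quot_mult op_in cls_eq_iff)
qed

end

lemma inter_cong:
  assumes "F \<noteq> {}" "\<And>R. R \<in> F \<Longrightarrow> congruence_rl S op e R"
  shows "congruence_rl S op e (\<Inter>F)"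
proof (rule congI)
  obtain R0 where "R0 \<in> F" using assms(1) by blast
  then show "\<Inter>F \<subseteq> S \<times> S" using R_sub[OF assms(2)] by blast
next
  fix x assume "x \<in> S" then show "(x,x) \<in> \<Inter>F" using R_refl[OF assms(2)] by blast
next
  fix x y assume "(x,y) \<in> \<Inter>F" then show "(y,x) \<in> \<Inter>F" using R_sym[OF assms(2)] by blast
next
  fix x y z assume "(x,y) \<in> \<Inter>F" "(y,z) \<in> \<Inter>F" then show "(x,z) \<in> \<Inter>F"
    using R_trans[OF assms(2)] by blast
next
  fix a b c d assume "(a,b) \<in> \<Inter>F" "(c,d) \<in> \<Inter>F" then show "(op a c, op b d) \<in> \<Inter>F"
    using R_op[OF assms(2)] by blast
next
  fix a b c d assume "(a,b) \<in> \<Inter>F" "(c,d) \<in> \<Inter>F"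
  then show "(rdiv S op c a, rdiv S op d b) \<in> \<Inter>F"
    using R_div[OF assms(2)] by blast
qed

end

theorem mainTheorem6:
  fixes S :: "'a set" and op :: "'a \<Rightarrow> 'a \<Rightarrow> 'a" and e :: 'a
  assumes "right_loop S op e"
  defines "L \<equiv> cong_gen S op e
             ({(x, thetaS x (fS S op y z)) | x y z. x \<in> S \<and> y \<in> S \<and> z \<in> S}
              \<union> {(op x y, op y x) | x y. x \<in> S \<and> y \<in> S})"
  shows "congruence_rl S op e L \<and> comm_group (quot_rl S op e L) \<and>
         (\<forall>R. congruence_rl S op e R \<and> comm_group (quot_rl S op e R) \<longrightarrow> L \<subseteq> R)"
proof -
  interpret rloop S op e by unfold_locales (rule assms(1))
  define G where "G = {(x, thetaS x (fS S op y z)) | x y z. x \<in> S \<and> y \<in> S \<and> z \<in> S}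
              \<union> {(op x y, op y x) | x y. x \<in> S \<and> y \<in> S}"
  have GS: "G \<subseteq> S \<times> S" unfolding G_def thetaS_def using fS_in op_in by auto
  have full: "congruence_rl S op e (S \<times> S)"
    by (rule congI) (auto simp: op_in rdiv_in)
  have LG: "L = \<Inter>{R. congruence_rl S op e R \<and> G \<subseteq> R}"
    unfolding L_def G_def cong_gen_def by simp
  have cL: "congruence_rl S op e L" unfolding LG
    by (rule inter_cong) (use full GS in auto)
  have GL: "G \<subseteq> L" unfolding LG by blast
  have g1: "(x, fS S op y z x) \<in> L" if "x \<in> S" "y \<in> S" "z \<in> S" for x y z
    using GL that unfolding G_def thetaS_def by blast
  have g2: "(op x y, op y x) \<in> L" if "x \<in> S" "y \<in> S" for x y
    using GL that unfolding G_def by blast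
  have "comm_group (quot_rl S op e L)"
  proof (rule quot_cg[OF cL])
    fix x y z assume xyz: "x \<in> S" "y \<in> S" "z \<in> S"
    have "(op x (op y z), op (fS S op y z x) (op y z)) \<in> L"
      using R_op[OF cL g1[OF xyz] R_refl[OF cL op_in[OF xyz(2,3)]]] .
    then show "(op (op x y) z, op x (op y z)) \<in> L"
      using fS_eq[OF xyz] R_sym[OF cL] by simp
  next
    fix x y assume "x \<in> S" "y \<in> S" then show "(op x y, op y x) \<in> L" by (rule g2)
  qed
  moreover have "L \<subseteq> R" if R: "congruence_rl S op e R" "comm_group (quot_rl S op e R)" for R
  proof -
    have "G \<subseteq> R"
    proof
      fix p assume "p \<in> G"
      then consider (a) x y z where "x \<in> S" "y \<in> S" "z \<in> S" "p = (x, fS S op y z x)"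
        | (b) x y where "x \<in> S" "y \<in> S" "p = (op x y, op y x)"
        unfolding G_def thetaS_def by blast
      then show "p \<in> R"
      proof cases
        case (a x y z)
        let ?w = "fS S op y z x"
        have wS: "?w \<in> S" using fS_in a by simp
        have "(op ?w (op y z), op x (op y z)) \<in> R"
          using quot_cg_D(1)[OF R a(1-3)] fS_eq[OF a(1-3)] by simp
        then have "(rdiv S op (op ?w (op y z)) (op y z), rdiv S op (op x (op y z)) (op y z)) \<in> R"
          using R_div[OF R(1) R_refl[OF R(1) op_in[OF a(2,3)]]] by blast
        moreover have "rdiv S op (op ?w (op y z)) (op y z) = ?w"
          using rdiv_uniq wS a op_in by simp
        moreover have "rdiv S op (op x (op y z)) (op y z) = x"
          using rdiv_uniq a op_in by simp
        ultimately show ?thesis using a(4) R_sym[OF R(1)] by simp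
      next
        case (b x y) then show ?thesis using quot_cg_D(2)[OF R b(1) b(2) b(2)] by simp
      qed
    qed
    then show ?thesis unfolding LG using R(1) by blast
  qed
  ultimately show ?thesis using cL by blast
qed

end
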